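(* Let $q\ge 2$ and let $D$ be a directed graph on $n$ vertices which has an induced acyclic subgraph on $I$ vertices. If $$(n-I)\left(\frac{q}{q-1}\right)^{I} < q,$$ then $D$ is not $q$-solvable.
   Context: A directed graph $D=(V,E)$ has arcs $E \subseteq \{(u,v)\in V^2 : u \neq v\}$ (bidirectional pairs allowed). An induced subgraph is acyclic if it contains no directed cycle. $N^-(v)=\{u:(u,v)\in E\}$. For $q\ge2$ let $[q]=\{0,\dots,q-1\}$. A $D$-function over $[q]$ is a map $f=(f_v)_{v\in V}:[q]^V\to[q]^V$ with each $f_v(x)$ depending only on $(x_u)_{u\in N^-(v)}$. $D$ is $q$-solvable if some $D$-function $f$ over $[q]$ has the property that for every $x\in[q]^V$ there is $v$ with $f_v(x)=x_v$. *)

theory Defs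
  imports "HOL-Analysis.Analysis" "HOL-Library.FuncSet"
begin

definition digraph :: "'v set \<Rightarrow> ('v \<times> 'v) set \<Rightarrow> bool" where
  "digraph V E \<longleftrightarrow> E \<subseteq> {(u, v). u \<in> V \<and> v \<in> V \<and> u \<noteq> v}"

definition in_nbrs :: "('v \<times> 'v) set \<Rightarrow> 'v \<Rightarrow> 'v set" where
  "in_nbrs E v = {u. (u, v) \<in> E}"

definition induced_acyclic :: "'v set \<Rightarrow> ('v \<times> 'v) set \<Rightarrow> 'v set \<Rightarrow> bool" where
  "induced_acyclic V E S \<longleftrightarrow> S \<subseteq> V \<and> acyclic (E \<inter> (S \<times> S))"

text \<open>Configurations x \<in> [q]^V, with [q] = {0..<q}; represented extensionally.\<close>
definition configs :: "'v set \<Rightarrow> nat \<Rightarrow> ('v \<Rightarrow> nat) set" where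
  "configs V q = V \<rightarrow>\<^sub>E {..<q}"

definition D_function :: "'v set \<Rightarrow> ('v \<times> 'v) set \<Rightarrow> nat \<Rightarrow> ('v \<Rightarrow> ('v \<Rightarrow> nat) \<Rightarrow> nat) \<Rightarrow> bool" where
  "D_function V E q f \<longleftrightarrow>
     (\<forall>v\<in>V. \<forall>x\<in>configs V q. f v x \<in> {..<q}) \<and>
     (\<forall>v\<in>V. \<forall>x\<in>configs V q. \<forall>y\<in>configs V q.
        (\<forall>u\<in>in_nbrs E v. x u = y u) \<longrightarrow> f v x = f v y)"

definition q_solvable :: "'v set \<Rightarrow> ('v \<times> 'v) set \<Rightarrow> nat \<Rightarrow> bool" where
  "q_solvable V E q \<longleftrightarrow>
     (\<exists>f. D_function V E q f \<and> (\<forall>x\<in>configs V q. \<exists>v\<in>V. f v x = x v))"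

end

theory Submission
  imports Defs
begin

lemma split_bij:
  assumes "s \<in> V"
  shows "bij_betw (\<lambda>(y,c). y(s:=c)) (configs (V-{s}) q \<times> {..<q}) (configs V q)"
  unfolding bij_betw_def
proof
  show "inj_on (\<lambda>(y,c). y(s:=c)) (configs (V-{s}) q \<times> {..<q})"
  proof (rule inj_onI, clarify)
    fix y c y' c'
    assume y: "y \<in> configs (V-{s}) q" and y': "y' \<in> configs (V-{s}) q"
      and eq: "y(s:=c) = y'(s:=c')"
    have "c = c'" using fun_cong[OF eq, of s] by simp
    moreover have "y = y'"
    proof
      fix v show "y v = y' v"
      proof (cases "v = s")
        case True
        then show ?thesis using y y' unfolding configs_def by (auto simp: PiE_def extensional_def)
      next
        case False
        then show ?thesis using fun_cong[OF eq, of v] by simp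
      qed
    qed
    ultimately show "y = y' \<and> c = c'" by simp
  qed
next
  show "(\<lambda>(y,c). y(s:=c)) ` (configs (V-{s}) q \<times> {..<q}) = configs V q"
  proof
    show "(\<lambda>(y,c). y(s:=c)) ` (configs (V-{s}) q \<times> {..<q}) \<subseteq> configs V q"
      using assms unfolding configs_def by (auto simp: PiE_def extensional_def Pi_def)
  next
    show "configs V q \<subseteq> (\<lambda>(y,c). y(s:=c)) ` (configs (V-{s}) q \<times> {..<q})"
    proof
      fix x assume x: "x \<in> configs V q"
      have "x = (\<lambda>(y,c). y(s:=c)) (x(s:=undefined), x s)" by simp
      moreover have "(x(s:=undefined), x s) \<in> configs (V-{s}) q \<times> {..<q}"
        using x assms unfolding configs_def by (auto simp: PiE_def extensional_def Pi_def)
      ultimately show "x \<in> (\<lambda>(y,c). y(s:=c)) ` (configs (V-{s}) q \<times> {..<q})" by blast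
    qed
  qed
qed

lemma count_fiber:
  assumes s: "s \<in> V" and fin: "finite V" and q: "0 < q"
  and Pinv: "\<And>x c. x \<in> configs V q \<Longrightarrow> c < q \<Longrightarrow> P (x(s:=c)) = P x"
  and ginv: "\<And>x c. x \<in> configs V q \<Longrightarrow> c < q \<Longrightarrow> g (x(s:=c)) = g x"
  shows "card {x \<in> configs V q. P x \<and> Q (g x) (x s)} =
    (\<Sum>y\<in>{y\<in>configs (V-{s}) q. P (y(s:=0))}. card {c\<in>{..<q}. Q (g (y(s:=0))) c})"
proof -
  let ?h = "\<lambda>(y::'a\<Rightarrow>nat,c). y(s:=c)"
  let ?C' = "configs (V-{s}) q"
  let ?K = "{y\<in>?C'. P (y(s:=0))}"
  let ?Sg = "SIGMA y:?K. {c\<in>{..<q}. Q (g (y(s:=0))) c}"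
  have bij: "bij_betw ?h (?C' \<times> {..<q}) (configs V q)" by (rule split_bij[OF s])
  have y0: "y(s:=0) \<in> configs V q" if "y \<in> ?C'" for y
    using bij that q unfolding bij_betw_def by force
  have key: "P (y(s:=c)) = P (y(s:=0)) \<and> g (y(s:=c)) = g (y(s:=0))"
    if "y \<in> ?C'" "c < q" for y c
  proof -
    have e: "y(s:=c) = (y(s:=0))(s:=c)" by simp
    show ?thesis using Pinv[OF y0[OF that(1)] that(2)] ginv[OF y0[OF that(1)] that(2)]
      by (simp only: e)
  qed
  have sub: "?Sg \<subseteq> ?C' \<times> {..<q}" by auto
  have img: "{x \<in> configs V q. P x \<and> Q (g x) (x s)} = ?h ` ?Sg"
  proof
    show "{x \<in> configs V q. P x \<and> Q (g x) (x s)} \<subseteq> ?h ` ?Sg"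
    proof
      fix x assume x: "x \<in> {x \<in> configs V q. P x \<and> Q (g x) (x s)}"
      then obtain y c where yc: "(y,c) \<in> ?C' \<times> {..<q}" "x = y(s:=c)"
        using bij unfolding bij_betw_def by (smt (verit, best) CollectD imageE prod.collapse split_beta)
      then have "(y,c) \<in> ?Sg" using x key[of y c] by auto
      then show "x \<in> ?h ` ?Sg" using yc by force
    qed
  next
    show "?h ` ?Sg \<subseteq> {x \<in> configs V q. P x \<and> Q (g x) (x s)}"
    proof
      fix x assume "x \<in> ?h ` ?Sg"
      then obtain y c where yc: "(y,c) \<in> ?Sg" "x = y(s:=c)" by auto
      then have "(y,c) \<in> ?C' \<times> {..<q}" by auto
      then have "x \<in> configs V q" using bij yc unfolding bij_betw_def by force
      then show "x \<in> {x \<in> configs V q. P x \<and> Q (g x) (x s)}"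
        using yc key[of y c] by auto
    qed
  qed
  have inj: "inj_on ?h ?Sg" using bij sub unfolding bij_betw_def using inj_on_subset by blast
  have finC': "finite ?C'" using fin unfolding configs_def by (auto intro: finite_PiE)
  have "card {x \<in> configs V q. P x \<and> Q (g x) (x s)} = card ?Sg"
    using img card_image[OF inj] by simp
  also have "\<dots> = (\<Sum>y\<in>?K. card {c\<in>{..<q}. Q (g (y(s:=0))) c})"
    by (rule card_SigmaI) (use finC' in auto)
  finally show ?thesis .
qed

theorem theorem13:
  fixes V :: "'v set" and E :: "('v \<times> 'v) set" and S :: "'v set" and q :: nat
  assumes "q \<ge> 2"
    and "finite V"
    and "digraph V E"
    and "induced_acyclic V E S"
    and "(real (card V) - real (card S)) * (real q / (real q - 1)) ^ card S < real q"
  shows "\<not> q_solvable V E q"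
proof
  assume "q_solvable V E q"
  then obtain f where Df: "D_function V E q f"
    and fx: "\<forall>x\<in>configs V q. \<exists>v\<in>V. f v x = x v"
    unfolding q_solvable_def by auto
  let ?C = "configs V q"
  let ?n = "card V"
  have q0: "0 < q" using assms(1) by simp
  have fin: "finite V" by fact
  have SV: "S \<subseteq> V" and acyc: "acyclic (E \<inter> (S \<times> S))"
    using assms(4) unfolding induced_acyclic_def by auto
  have noloop: "v \<notin> in_nbrs E v" for v
    using assms(3) unfolding digraph_def in_nbrs_def by auto
  have ext_in: "x(w:=c) \<in> ?C" if "x \<in> ?C" "w \<in> V" "c < q" for x w c
    using that unfolding configs_def by (auto simp: PiE_def extensional_def Pi_def)
  have dep: "f v (x(w:=c)) = f v x"
    if "v \<in> V" "x \<in> ?C" "c < q" "w \<in> V" "w \<notin> in_nbrs E v" for v x c w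
  proof -
    have "\<forall>u\<in>in_nbrs E v. (x(w:=c)) u = x u" using that(5) by auto
    moreover have "\<forall>v\<in>V. \<forall>x\<in>?C. \<forall>y\<in>?C.
        (\<forall>u\<in>in_nbrs E v. x u = y u) \<longrightarrow> f v x = f v y"
      using Df unfolding D_function_def by (elim conjE)
    ultimately show ?thesis using that(1,2) ext_in[OF that(2) that(4) that(3)] by blast
  qed
  have frange: "f v x < q" if "v \<in> V" "x \<in> ?C" for v x
  proof -
    have "\<forall>v\<in>V. \<forall>x\<in>?C. f v x \<in> {..<q}"
      using Df unfolding D_function_def by (elim conjE)
    then show ?thesis using that by blast
  qed
  have cardC: "card ?C = q ^ ?n"
    unfolding configs_def using fin by (simp add: card_PiE)
  have finC: "finite ?C" unfolding configs_def using fin by (simp add: finite_PiE)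
  have claim: "\<forall>S'. S' \<subseteq> S \<longrightarrow> card S' = k \<longrightarrow>
     card {x\<in>?C. \<forall>s\<in>S'. f s x \<noteq> x s} * q ^ k = q ^ ?n * (q - 1) ^ k" for k
  proof (induction k)
    case 0
    show ?case
    proof (intro allI impI)
      fix S' assume "S' \<subseteq> S" "card S' = 0"
      then have "finite S'" "card S' = 0" using SV fin by (auto intro: finite_subset[OF _ fin])
      then have "S' = {}" by simp
      then show "card {x\<in>?C. \<forall>s\<in>S'. f s x \<noteq> x s} * q ^ 0 = q ^ ?n * (q - 1) ^ 0"
        using cardC by simp
    qed
  next
    case (Suc k)
    show ?case
    proof (intro allI impI)
      fix S' assume S'S: "S' \<subseteq> S" and cS': "card S' = Suc k"
      have finS': "finite S'" using S'S SV by (auto intro: finite_subset[OF _ fin])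
      have ne: "S' \<noteq> {}" using cS' by auto
      let ?r = "E \<inter> (S' \<times> S')"
      have "acyclic ?r" using S'S by (intro acyclic_subset[OF acyc]) auto
      then have "acyclic (?r\<inverse>)" by (simp add: acyclic_converse)
      moreover have "finite (?r\<inverse>)" using finS' by auto
      ultimately have "wf (?r\<inverse>)" by (simp add: finite_acyclic_wf)
      then obtain s where sS': "s \<in> S'" and smin: "\<And>y. (y, s) \<in> ?r\<inverse> \<Longrightarrow> y \<notin> S'"
        using ne by (rule wfE_min') blast
      have sink: "(s, y) \<notin> E" if "y \<in> S'" for y using smin sS' that by auto
      have sV: "s \<in> V" using sS' S'S SV by auto
      define S'' where "S'' = S' - {s}"
      have S''S: "S'' \<subseteq> S" and cS'': "card S'' = k" using S'S cS' sS' finS'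
        unfolding S''_def by auto
      define P where "P = (\<lambda>x. \<forall>s'\<in>S''. f s' x \<noteq> x s')"
      have IH: "card {x\<in>?C. P x} * q ^ k = q ^ ?n * (q - 1) ^ k"
        using Suc.IH S''S cS'' unfolding P_def by blast
      have Pinv: "P (x(s:=c)) = P x" if "x \<in> ?C" "c < q" for x c
      proof -
        have "f s' (x(s:=c)) = f s' x \<and> (x(s:=c)) s' = x s'" if "s' \<in> S''" for s'
        proof -
          have "s' \<in> V" "s' \<noteq> s" "s' \<in> S'" using that S'S SV unfolding S''_def by auto
          moreover have "s \<notin> in_nbrs E s'" using sink \<open>s' \<in> S'\<close> unfolding in_nbrs_def by auto
          ultimately show ?thesis using dep[of s' x c s] \<open>x \<in> ?C\<close> \<open>c < q\<close> sV by auto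
        qed
        then show ?thesis unfolding P_def by auto
      qed
      have ginv: "f s (x(s:=c)) = f s x" if "x \<in> ?C" "c < q" for x c
        using dep[OF sV that sV noloop] .
      define K where "K = {y\<in>configs (V-{s}) q. P (y(s:=0))}"
      have cB: "card {x\<in>?C. P x \<and> True} = card K * q"
        using count_fiber[OF sV fin q0, of P "f s" "\<lambda>a c. True", OF Pinv ginv]
        unfolding K_def by simp
      have y0: "y(s:=0) \<in> ?C" if "y \<in> configs (V-{s}) q" for y
        using split_bij[OF sV, of q] that q0 unfolding bij_betw_def by force
      have cnt: "card {c\<in>{..<q}. f s (y(s:=0)) \<noteq> c} = q - 1" if "y \<in> K" for y
      proof -
        have "f s (y(s:=0)) < q" using frange[OF sV y0] that unfolding K_def by auto
        moreover have "{c\<in>{..<q}. f s (y(s:=0)) \<noteq> c} = {..<q} - {f s (y(s:=0))}" by auto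
        ultimately show ?thesis by simp
      qed
      have cA: "card {x\<in>?C. P x \<and> f s x \<noteq> x s} = card K * (q - 1)"
        using count_fiber[OF sV fin q0, of P "f s" "\<lambda>a c. a \<noteq> c", OF Pinv ginv] cnt
        unfolding K_def[symmetric] by simp
      have eqset: "{x\<in>?C. \<forall>s\<in>S'. f s x \<noteq> x s} = {x\<in>?C. P x \<and> f s x \<noteq> x s}"
        using sS' unfolding P_def S''_def by auto
      have "card {x\<in>?C. \<forall>s\<in>S'. f s x \<noteq> x s} * q ^ Suc k
          = (q - 1) * (card K * q * q ^ k)" using eqset cA by (simp add: algebra_simps)
      also have "\<dots> = (q - 1) * (q ^ ?n * (q - 1) ^ k)" using cB IH by simp
      finally show "card {x\<in>?C. \<forall>s\<in>S'. f s x \<noteq> x s} * q ^ Suc k = q ^ ?n * (q - 1) ^ Suc k"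
        by (simp add: algebra_simps)
    qed
  qed
  let ?I = "card S"
  let ?A = "{x\<in>?C. \<forall>s\<in>S. f s x \<noteq> x s}"
  have cA: "card ?A * q ^ ?I = q ^ ?n * (q - 1) ^ ?I" using claim by blast
  have fixcnt: "card {x\<in>?C. True \<and> f t x = x t} * q = q ^ ?n" if tV: "t \<in> V" for t
  proof -
    have ginv: "f t (x(t:=c)) = f t x" if "x \<in> ?C" "c < q" for x c
      using dep[OF tV that tV noloop] .
    define K where "K = {y\<in>configs (V-{t}) q. True}"
    have y0: "y(t:=0) \<in> ?C" if "y \<in> configs (V-{t}) q" for y
      using split_bij[OF tV, of q] that q0 unfolding bij_betw_def by force
    have c1: "card {x\<in>?C. True \<and> True} = card K * q"
      using count_fiber[OF tV fin q0, of "\<lambda>x. True" "f t" "\<lambda>a c. True", OF _ ginv]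
      unfolding K_def by simp
    have cnt: "card {c\<in>{..<q}. f t (y(t:=0)) = c} = 1" if "y \<in> K" for y
    proof -
      have "f t (y(t:=0)) < q" using frange[OF tV y0] that unfolding K_def by auto
      then have "{c\<in>{..<q}. f t (y(t:=0)) = c} = {f t (y(t:=0))}" by auto
      then show ?thesis by simp
    qed
    have c2: "card {x\<in>?C. True \<and> f t x = x t} = card K"
      using count_fiber[OF tV fin q0, of "\<lambda>x. True" "f t" "\<lambda>a c. a = c", OF _ ginv] cnt
      unfolding K_def[symmetric] by simp
    show ?thesis using c1 c2 cardC by simp
  qed
  have sub: "?A \<subseteq> (\<Union>t\<in>V-S. {x\<in>?C. True \<and> f t x = x t})"
  proof
    fix x assume x: "x \<in> ?A"
    then obtain v where "v \<in> V" "f v x = x v" using fx by blast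
    then show "x \<in> (\<Union>t\<in>V-S. {x\<in>?C. True \<and> f t x = x t})" using x by auto
  qed
  have "card ?A \<le> card (\<Union>t\<in>V-S. {x\<in>?C. True \<and> f t x = x t})"
    using sub finC fin by (intro card_mono) (auto intro: finite_UN_I)
  also have "\<dots> \<le> (\<Sum>t\<in>V-S. card {x\<in>?C. True \<and> f t x = x t})"
    by (rule card_UN_le) (use fin in auto)
  finally have "card ?A * q \<le> (\<Sum>t\<in>V-S. card {x\<in>?C. True \<and> f t x = x t}) * q" by simp
  also have "\<dots> = (\<Sum>t\<in>V-S. card {x\<in>?C. True \<and> f t x = x t} * q)"
    by (simp add: sum_distrib_right)
  also have "\<dots> = (\<Sum>t\<in>V-S. q ^ ?n)" using fixcnt by (intro sum.cong) auto
  finally have le1: "card ?A * q \<le> card (V - S) * q ^ ?n" by simp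
  have "q ^ ?n * ((q - 1) ^ ?I * q) = card ?A * q * q ^ ?I" using cA by (simp add: algebra_simps)
  also have "\<dots> \<le> card (V - S) * q ^ ?n * q ^ ?I" using le1 by simp
  finally have "q ^ ?n * ((q - 1) ^ ?I * q) \<le> q ^ ?n * (card (V - S) * q ^ ?I)"
    by (simp add: algebra_simps)
  then have nat_ineq: "(q - 1) ^ ?I * q \<le> card (V - S) * q ^ ?I" using q0 by simp
  then have r1: "real ((q - 1) ^ ?I * q) \<le> real (card (V - S) * q ^ ?I)"
    by (simp only: of_nat_le_iff)
  have r2: "real (q - 1) = real q - 1" using q0 by (simp add: of_nat_diff)
  have real_ineq: "(real q - 1) ^ ?I * real q \<le> real (card (V - S)) * real q ^ ?I"
    using r1 unfolding of_nat_mult of_nat_power r2 .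
  have cVS: "real (card (V - S)) = real (card V) - real (card S)"
    using SV fin by (simp add: card_Diff_subset finite_subset of_nat_diff card_mono)
  have pos: "(real q - 1) ^ ?I > 0" using assms(1) by simp
  have "(real (card V) - real (card S)) * (real q / (real q - 1)) ^ ?I
      = real (card (V - S)) * real q ^ ?I / (real q - 1) ^ ?I"
    using cVS by (simp add: power_divide)
  also have "\<dots> \<ge> real q" using real_ineq pos by (simp add: le_divide_eq mult.commute)
  finally show False using assms(5) by simp
qed

end
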